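(* Let $p$ be an odd prime, $a_1,a_2,a_3\in\mathbb{F}_p$, $s=3+a_1+a_2+a_3$, and fix an index $i$ (indices modulo $3$). Let $x\neq(0,0,0)$ be a solution in $\mathbb{F}_p^3$ of \[ x_1^2+x_2^2+x_3^2+a_1x_2x_3+a_2x_1x_3+a_3x_1x_2 = s\,x_1x_2x_3 \] with $x_i=0$. Let $m_k$ ($k=1,2,3$) replace $x_k$ by $-x_k + s x_{k-1}x_{k+1} - a_{k+1}x_{k-1} - a_{k-1}x_{k+1}$ leaving the other coordinates unchanged, let $\rho = m_{i+1}\circ m_{i-1}$, and let $N$ be the order of $\rho$ as a permutation of the nonzero solutions with $i$-th coordinate $0$. For such solutions $y$ (which have $y_{i-1}y_{i+1}\neq 0$) define \[ \Delta_i(y) = \frac12\Big(\frac{a_{i-1}}{y_{i-1}} + \frac{a_{i+1}}{y_{i+1}}\Big). \] If $a_i^2\neq 4$, then \[ \sum_{\ell=0}^{N-1}\Big(\Delta_i(m_{i-1}\rho^\ell x) + \Delta_i(\rho^\ell x)\Big) = 0. \] If $a_i^2 = 4$, then this identity holds if and only if $2a_{i-1} = a_{i+1}a_i$. *)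

theory Defs
  imports Main "HOL-Library.Numeral_Type" "HOL-Computational_Algebra.Primes"
begin

text \<open>Points of F_p^3 are functions from the index type 3 (integers mod 3)
  to the field; index 0 of type 3 plays the role of the paper's index 3.\<close>

definition sval :: "(3 \<Rightarrow> 'a::field) \<Rightarrow> 'a" where
  "sval a = 3 + a 1 + a 2 + a 0"

definition is_sol :: "(3 \<Rightarrow> 'a::field) \<Rightarrow> (3 \<Rightarrow> 'a) \<Rightarrow> bool" where
  "is_sol a x \<longleftrightarrow>
     x 1 ^ 2 + x 2 ^ 2 + x 0 ^ 2 + a 1 * x 2 * x 0 + a 2 * x 1 * x 0 + a 0 * x 1 * x 2
     = sval a * x 1 * x 2 * x 0"

definition mv :: "(3 \<Rightarrow> 'a::field) \<Rightarrow> 3 \<Rightarrow> (3 \<Rightarrow> 'a) \<Rightarrow> (3 \<Rightarrow> 'a)" where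
  "mv a k x = x(k := - x k + sval a * x (k - 1) * x (k + 1)
                     - a (k + 1) * x (k - 1) - a (k - 1) * x (k + 1))"

definition rho :: "(3 \<Rightarrow> 'a::field) \<Rightarrow> 3 \<Rightarrow> (3 \<Rightarrow> 'a) \<Rightarrow> (3 \<Rightarrow> 'a)" where
  "rho a i = mv a (i + 1) \<circ> mv a (i - 1)"

definition solset :: "(3 \<Rightarrow> 'a::field) \<Rightarrow> 3 \<Rightarrow> (3 \<Rightarrow> 'a) set" where
  "solset a i = {y. is_sol a y \<and> y \<noteq> (\<lambda>_. 0) \<and> y i = 0}"

definition rho_order :: "(3 \<Rightarrow> 'a::field) \<Rightarrow> 3 \<Rightarrow> nat" where
  "rho_order a i = (LEAST n. n > 0 \<and> (\<forall>y \<in> solset a i. (rho a i ^^ n) y = y))"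

definition Delta :: "(3 \<Rightarrow> 'a::field) \<Rightarrow> 3 \<Rightarrow> (3 \<Rightarrow> 'a) \<Rightarrow> 'a" where
  "Delta a i y = (a (i - 1) / y (i - 1) + a (i + 1) / y (i + 1)) / 2"

end

theory Submission
  imports Defs "HOL-Number_Theory.Residues"
begin

lemma ex3: fixes x :: 3 shows "x = 0 \<or> x = 1 \<or> x = 2"
proof (induct x)
  case (of_int z)
  then have "z = 0 \<or> z = 1 \<or> z = 2" by fastforce
  then show ?case by auto
qed

lemma idx3: fixes i :: 3
  shows "i - 1 - 1 = i + 1" "i - 1 + 1 = i" "i + 1 - 1 = i" "i + 1 + 1 = i - 1"
    "i - 1 \<noteq> i" "i + 1 \<noteq> i" "i - 1 \<noteq> i + 1" "i - 2 = i + 1" "2 + i = i - 1" "i + 2 = i - 1"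
  using ex3[of i] by auto

lemma sol_plane:
  assumes "is_sol a y" "y i = 0"
  shows "y (i-1)^2 + y (i+1)^2 + a i * y (i-1) * y (i+1) = 0"
  proof -
  have e: "(-1::3) = 2" "(3::3) = 0" by simp_all
  show ?thesis using ex3[of i] assms by (auto simp: is_sol_def algebra_simps e)
qed

lemma two_ne0:
  assumes "prime p" "odd p" "CARD('a::{field,finite}) = p"
  shows "(2::'a) \<noteq> 0"
proof
  assume "(2::'a) = 0"
  hence "of_nat 2 = (0::'a)" by simp
  hence d: "CHAR('a) dvd 2" by (simp only: of_nat_eq_0_iff_char_dvd)
  have "CHAR('a) > 0" by (simp add: finite_imp_CHAR_pos)
  moreover have "CHAR('a) \<noteq> 1" by simp
  moreover have "CHAR('a) \<le> 2" using dvd_imp_le[OF d] by simp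
  ultimately have "CHAR('a) = 2" by linarith
  with CHAR_dvd_CARD[where ?'a='a] assms have "2 dvd p" by simp
  thus False using assms by simp
qed

lemma idx_cover: fixes i t :: 3 shows "t = i \<or> t = i - 1 \<or> t = i + 1"
  using ex3[of i] ex3[of t] by auto

lemma mv_invol: "mv a k (mv a k y) = y"
  using idx3[of k] by (auto simp: mv_def)

lemma mv_j: assumes "y i = 0"
  shows "mv a (i-1) y = y(i-1 := - y (i-1) - a i * y (i+1))"
  unfolding mv_def idx3(1,2)[of i] using assms by simp

lemma mv_k: assumes "y i = 0"
  shows "mv a (i+1) y = y(i+1 := - y (i+1) - a i * y (i-1))"
  unfolding mv_def idx3(3,4)[of i] using assms by simp

lemma rho_plane: assumes "y i = 0"
  shows "rho a i y = y(i-1 := - y (i-1) - a i * y (i+1),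
      i+1 := - y (i+1) - a i * (- y (i-1) - a i * y (i+1)))"
proof -
  have "(mv a (i-1) y) i = 0" using assms idx3[of i] by (simp add: mv_j)
  then show ?thesis using assms idx3[of i] by (simp add: rho_def mv_j mv_k)
qed

lemma rho_scale: assumes "y i = 0"
  shows "rho a i (\<lambda>t. m * y t) = (\<lambda>t. m * rho a i y t)"
proof -
  have "(\<lambda>t. m * y t) i = 0" using assms by simp
  then show ?thesis using assms idx3[of i]
    by (simp add: rho_plane fun_eq_iff algebra_simps)
qed

lemma mvj_scale: assumes "y i = 0"
  shows "mv a (i-1) (\<lambda>t. m * y t) = (\<lambda>t. m * mv a (i-1) y t)"
proof -
  have "(\<lambda>t. m * y t) i = 0" using assms by simp
  then show ?thesis using assms idx3[of i]
    by (simp add: mv_j fun_eq_iff algebra_simps)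
qed

lemma Delta_scale: "Delta a i (\<lambda>t. m * y t) = Delta a i y / m"
  by (simp add: Delta_def divide_divide_eq_left add_divide_distrib mult_ac)

lemma nonzero_coords:
  assumes "is_sol a y" "y \<noteq> (\<lambda>_. 0)" "y i = 0"
  shows "y (i-1) \<noteq> 0" "y (i+1) \<noteq> 0"
proof -
  have Q: "y (i-1)^2 + y (i+1)^2 + a i * y (i-1) * y (i+1) = 0"
    using sol_plane assms by blast
  show "y (i-1) \<noteq> 0"
  proof
    assume h: "y (i-1) = 0"
    then have "y (i+1) = 0" using Q by simp
    then have "y = (\<lambda>_. 0)" using h assms(3) idx_cover[of _ i] by (metis)
    then show False using assms by simp
  qed
  show "y (i+1) \<noteq> 0"
  proof
    assume h: "y (i+1) = 0"
    then have "y (i-1) = 0" using Q by simp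
    then have "y = (\<lambda>_. 0)" using h assms(3) idx_cover[of _ i] by (metis)
    then show False using assms by simp
  qed
qed

lemma rho_eigen:
  assumes "is_sol a y" "y \<noteq> (\<lambda>_. 0)" "y i = 0"
  shows "rho a i y = (\<lambda>t. (- (y (i-1) + a i * y (i+1)) / y (i-1)) * y t)"
proof -
  define u v c where "u = y (i-1)" "v = y (i+1)" "c = a i"
  have Q: "u^2 + v^2 + c * u * v = 0"
    using sol_plane assms unfolding u_v_c_def by blast
  have u0: "u \<noteq> 0" using nonzero_coords assms unfolding u_v_c_def by blast
  have e1: "- u - c * v = (- (u + c * v) / u) * u" using u0 by (simp add: field_simps)
  have e2: "- v - c * (- u - c * v) = (- (u + c * v) / u) * v"
  proof -
    have "u * (- v - c * (- u - c * v)) - (- (u + c * v) * v) = c * (u^2 + v^2 + c*u*v)"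
      by (simp add: algebra_simps power2_eq_square)
    then have h: "- (u + c * v) * v = u * (- v - c * (- u - c * v))" using Q by simp
    have "(- (u + c * v) / u) * v = (- (u + c * v) * v) / u" by simp
    also have "\<dots> = (u * (- v - c * (- u - c * v))) / u" by (simp only: h)
    also have "\<dots> = - v - c * (- u - c * v)" using u0 by (rule nonzero_mult_div_cancel_left)
    finally show ?thesis by simp
  qed
  show ?thesis
  proof
    fix t
    show "rho a i y t = (- (y (i-1) + a i * y (i+1)) / y (i-1)) * y t"
      using idx_cover[of t i] idx3[of i] assms(3) e1 e2
      by (auto simp: rho_plane u_v_c_def)
  qed
qed

lemma rho_fin: fixes a :: "3 \<Rightarrow> 'a::{field,finite}" shows "\<exists>n>0. \<forall>y. (rho a i ^^ n) y = y"
proof -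
  have injr: "inj (rho a i)" unfolding rho_def
    by (intro inj_compose) (metis inj_on_inverseI mv_invol)+
  have "\<not> inj (\<lambda>n::nat. rho a i ^^ n)"
  proof
    assume "inj (\<lambda>n::nat. rho a i ^^ n)"
    then have "finite (UNIV :: nat set)"
      using finite_imageD[of "\<lambda>n::nat. rho a i ^^ n" UNIV] by simp
    then show False by simp
  qed
  then obtain m n :: nat where mn: "m \<noteq> n" "rho a i ^^ m = rho a i ^^ n"
    unfolding inj_def by blast
  have "\<exists>m n. m < n \<and> rho a i ^^ m = rho a i ^^ n"
    using mn by (metis linorder_neqE_nat)
  then obtain m n where mn2: "m < n" "rho a i ^^ m = rho a i ^^ n" by blast
  have im: "inj (rho a i ^^ m)" using injr by (simp add: inj_fn)
  have "\<forall>y. (rho a i ^^ (n - m)) y = y"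
  proof
    fix y
    have "(rho a i ^^ m) ((rho a i ^^ (n - m)) y) = (rho a i ^^ n) y"
      using mn2(1) funpow_add[of m "n-m" "rho a i"] by (simp add: comp_def)
    also have "\<dots> = (rho a i ^^ m) y" using mn2 by simp
    finally show "(rho a i ^^ (n - m)) y = y" using im by (simp add: inj_eq)
  qed
  then show ?thesis using mn2 by (intro exI[of _ "n-m"]) auto
qed

theorem proposition2p3:
  fixes p :: nat and a x :: "3 \<Rightarrow> 'a::{field,finite}" and i :: 3
  assumes "prime p" and "odd p" and "CARD('a) = p"
    and "is_sol a x" and "x \<noteq> (\<lambda>_. 0)" and "x i = 0"
  shows "(a i ^ 2 \<noteq> 4 \<longrightarrow>
            (\<Sum>l<rho_order a i. Delta a i (mv a (i - 1) ((rho a i ^^ l) x))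
                                + Delta a i ((rho a i ^^ l) x)) = 0)
       \<and> (a i ^ 2 = 4 \<longrightarrow>
            ((\<Sum>l<rho_order a i. Delta a i (mv a (i - 1) ((rho a i ^^ l) x))
                                + Delta a i ((rho a i ^^ l) x)) = 0
             \<longleftrightarrow> 2 * a (i - 1) = a (i + 1) * a i))"
proof -
  define u v c where "u = x (i-1)" "v = x (i+1)" "c = a i"
  define lam where "lam = - (u + c * v) / u"
  have Q: "u^2 + v^2 + c * u * v = 0"
    using sol_plane assms unfolding u_v_c_def by blast
  have u0: "u \<noteq> 0" and v0: "v \<noteq> 0"
    using nonzero_coords assms unfolding u_v_c_def by blast+
  have two: "(2::'a) \<noteq> 0" using two_ne0 assms(1-3) by blast
  have eig: "rho a i x = (\<lambda>t. lam * x t)"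
    using rho_eigen[OF assms(4-6)] unfolding lam_def u_v_c_def by simp
  have pow: "(rho a i ^^ l) x = (\<lambda>t. lam ^ l * x t)" for l
  proof (induction l)
    case 0 then show ?case by simp
  next
    case (Suc l)
    have "(rho a i ^^ Suc l) x = rho a i (\<lambda>t. lam ^ l * x t)" using Suc by simp
    also have "\<dots> = (\<lambda>t. lam ^ l * rho a i x t)" using rho_scale assms(6) by blast
    finally show ?case by (simp add: eig mult_ac)
  qed
  define C where "C = Delta a i (mv a (i - 1) x) + Delta a i x"
  have trm: "Delta a i (mv a (i - 1) ((rho a i ^^ l) x)) + Delta a i ((rho a i ^^ l) x)
      = C * (inverse lam) ^ l" for l
    unfolding pow mvj_scale[of x i, OF assms(6)] Delta_scale C_def
    by (simp add: divide_inverse power_inverse algebra_simps)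
  have ex: "\<exists>n. n > 0 \<and> (\<forall>y \<in> solset a i. (rho a i ^^ n) y = y)"
    using rho_fin[of a i] by blast
  define N where "N = rho_order a i"
  have N: "N > 0 \<and> (\<forall>y \<in> solset a i. (rho a i ^^ N) y = y)"
    unfolding N_def rho_order_def by (rule LeastI_ex[OF ex])
  have xs: "x \<in> solset a i" using assms unfolding solset_def by simp
  have "(rho a i ^^ N) x = x" using N xs by blast
  then have "lam ^ N * u = u" unfolding pow u_v_c_def by (metis)
  then have lamN: "lam ^ N = 1" using u0 by simp
  have sumeq: "(\<Sum>l<rho_order a i. Delta a i (mv a (i - 1) ((rho a i ^^ l) x))
                                + Delta a i ((rho a i ^^ l) x)) = C * (\<Sum>l<N. (inverse lam) ^ l)"
    unfolding trm N_def by (simp add: sum_distrib_left)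
  have sq: "(2*u + c*v)^2 = 4 * (u^2 + v^2 + c*u*v) + (c^2 - 4) * v^2"
    by (simp add: algebra_simps power2_eq_square)
  show ?thesis
  proof (intro conjI impI)
    assume c4: "a i ^ 2 \<noteq> 4"
    have "lam \<noteq> 1"
    proof
      assume "lam = 1"
      then have "- (u + c * v) = u" using u0 unfolding lam_def by (simp add: divide_eq_eq)
      then have "2*u + c*v = 0" by (simp add: algebra_simps)
      then have "(c^2 - 4) * v^2 = 0" using sq Q by simp
      then show False using v0 c4 unfolding u_v_c_def by simp
    qed
    then have m1: "inverse lam \<noteq> 1" by (metis inverse_1 inverse_inverse_eq)
    have "(inverse lam) ^ N = 1" using lamN by (simp add: power_inverse)
    then have "(\<Sum>l<N. (inverse lam) ^ l) = 0" using m1 by (simp add: sum_gp_strict)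
    then show "(\<Sum>l<rho_order a i. Delta a i (mv a (i - 1) ((rho a i ^^ l) x))
                                + Delta a i ((rho a i ^^ l) x)) = 0" using sumeq by simp
  next
    assume c4: "a i ^ 2 = 4"
    have fix1: "rho a i y = y" if "y \<in> solset a i" for y
    proof -
      have ys: "is_sol a y" "y \<noteq> (\<lambda>_. 0)" "y i = 0" using that unfolding solset_def by auto
      define u' v' where "u' = y (i-1)" "v' = y (i+1)"
      have Q': "u'^2 + v'^2 + c * u' * v' = 0"
        using sol_plane ys unfolding u'_v'_def u_v_c_def by blast
      have u'0: "u' \<noteq> 0" using nonzero_coords ys unfolding u'_v'_def by blast
      have "(2*u' + c*v')^2 = 4 * (u'^2 + v'^2 + c*u'*v') + (c^2 - 4) * v'^2"
        by (simp add: algebra_simps power2_eq_square)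
      then have "(2*u' + c*v')^2 = 0" using Q' c4 unfolding u_v_c_def by simp
      then have "2*u' + c*v' = 0" by simp
      then have "- (u' + c * v') = u'" by (simp add: algebra_simps)
      then have "- (u' + c * v') / u' = 1" using u'0 by simp
      then show ?thesis using rho_eigen[OF ys] unfolding u'_v'_def u_v_c_def by simp
    qed
    have "rho_order a i = 1"
      unfolding rho_order_def
      by (rule Least_equality) (auto simp: fix1)
    then have s1: "(\<Sum>l<rho_order a i. Delta a i (mv a (i - 1) ((rho a i ^^ l) x))
                                + Delta a i ((rho a i ^^ l) x)) = Delta a i (mv a (i - 1) x) + Delta a i x"
      by simp
    have "(2*u + c*v)^2 = 0" using sq Q c4 unfolding u_v_c_def by simp
    then have h2: "2*u + c*v = 0" by simp
    then have "- u - c * v = u" by (simp add: algebra_simps)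
    then have e: "- x (i-1) - a i * x (i+1) = x (i-1)" unfolding u_v_c_def .
    have "mv a (i - 1) x = x" by (simp only: mv_j[of x i a, OF assms(6)] e fun_upd_triv)
    then have "Delta a i (mv a (i - 1) x) + Delta a i x = a (i-1) / u + a (i+1) / v"
      unfolding Delta_def u_v_c_def using two by (simp add: mult.commute[of 2])
    also have "\<dots> = (a (i-1) * v + a (i+1) * u) / (u * v)" using u0 v0 by (simp add: field_simps)
    finally have s2: "Delta a i (mv a (i - 1) x) + Delta a i x = (a (i-1) * v + a (i+1) * u) / (u * v)" .
    have h2': "2*u = -(c*v)" using h2 by (simp add: eq_neg_iff_add_eq_0)
    have "2 * (a (i-1) * v + a (i+1) * u) = 2*a(i-1)*v + a(i+1)*(2*u)" by (simp add: algebra_simps)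
    also have "\<dots> = 2*a(i-1)*v + a(i+1)*(-(c*v))" by (simp only: h2')
    also have "\<dots> = (2 * a (i-1) - a (i+1) * c) * v" by (simp add: algebra_simps)
    finally have "2 * (a (i-1) * v + a (i+1) * u) = (2 * a (i-1) - a (i+1) * c) * v" .
    then have "(a (i-1) * v + a (i+1) * u = 0) \<longleftrightarrow> (2 * a (i-1) - a (i+1) * c = 0)"
      using two v0 by (metis mult_eq_0_iff)
    then show "(\<Sum>l<rho_order a i. Delta a i (mv a (i - 1) ((rho a i ^^ l) x))
                                + Delta a i ((rho a i ^^ l) x)) = 0
             \<longleftrightarrow> 2 * a (i - 1) = a (i + 1) * a i"
      unfolding s1 s2 using u0 v0 unfolding u_v_c_def by simp
  qed
qed

end
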